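(* Let $n\geqslant2$. For $\kappa>0$ set $\widetilde\sigma(\kappa)=c(\kappa)/\kappa$ and $\beta=c(\kappa)^2+n\widetilde\sigma(\kappa)-1$. Then $\beta>0$ for every $\kappa>0$.
   Context: $c(\kappa)=\frac{\int_0^\pi\cos\theta\,e^{\kappa\cos\theta}\sin^{n-2}\theta\,\mathrm d\theta}{\int_0^\pi e^{\kappa\cos\theta}\sin^{n-2}\theta\,\mathrm d\theta}$. *)

theory Defs
  imports "HOL-Analysis.Analysis"
begin

definition cfun :: "nat \<Rightarrow> real \<Rightarrow> real" where
  "cfun n \<kappa> =
     integral {0..pi} (\<lambda>\<theta>. cos \<theta> * exp (\<kappa> * cos \<theta>) * sin \<theta> ^ (n - 2))
   / integral {0..pi} (\<lambda>\<theta>. exp (\<kappa> * cos \<theta>) * sin \<theta> ^ (n - 2))"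

definition sigma_tilde :: "nat \<Rightarrow> real \<Rightarrow> real" where
  "sigma_tilde n \<kappa> = cfun n \<kappa> / \<kappa>"

definition beta :: "nat \<Rightarrow> real \<Rightarrow> real" where
  "beta n \<kappa> = (cfun n \<kappa>)\<^sup>2 + real n * sigma_tilde n \<kappa> - 1"

end

theory Submission
  imports Defs
begin

lemma int_pos:
  fixes f :: "real \<Rightarrow> real"
  assumes c: "continuous_on {0..pi} f" and nn: "\<And>x. x \<in> {0..pi} \<Longrightarrow> f x \<ge> 0"
    and z: "z \<in> {0..pi}" "f z > 0"
  shows "integral {0..pi} f > 0"
proof -
  have "integral {0..pi} f \<ge> 0"
    by (rule integral_nonneg[OF integrable_continuous_interval[OF c]]) (use nn in auto)
  moreover have "integral {0..pi} f \<noteq> 0"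
    using integral_eq_0_iff[OF c pi_gt_zero nn] z by auto
  ultimately show ?thesis by linarith
qed

lemma int_refl:
  fixes f :: "real \<Rightarrow> real"
  shows "integral {0..pi} (\<lambda>x. f (pi - x)) = integral {0..pi} f"
proof -
  have "integral {0..pi} f = integral {-pi..-0} (\<lambda>x. f (-x))"
    using Henstock_Kurzweil_Integration.integral_reflect_real[of pi 0 f] unfolding minus_zero by (rule sym)
  also have "\<dots> = integral {-pi - (-pi)..0 - (-pi)} (\<lambda>x. (\<lambda>x. f (-x)) (x + (-pi)))"
    using integral_shift_real_ivl[where a="-pi" and b=0 and c="-pi" and f="\<lambda>x. f (-x)"] by simp
  finally show ?thesis by simp
qed

lemma int_odd:
  fixes g :: "real \<Rightarrow> real"
  assumes "\<And>x. g (pi - x) = - g x"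
  shows "integral {0..pi} g = 0"
proof -
  have "integral {0..pi} g = integral {0..pi} (\<lambda>x. g (pi - x))" by (rule int_refl[symmetric])
  also have "\<dots> = - integral {0..pi} g" by (simp add: assms)
  finally show ?thesis by simp
qed

lemma pointwise:
  fixes t s k :: real
  assumes "s \<ge> 0" "k > 0"
  shows "(t^2 - s^2) * (t * sinh (k * t) - s * tanh (k * s) * cosh (k * t)) \<ge> 0"
proof -
  define a where "a = \<bar>t\<bar>"
  have a0: "a \<ge> 0" by (simp add: a_def)
  have ts: "t * sinh (k * t) = a * sinh (k * a)"
    by (cases "t \<ge> 0") (auto simp: a_def)
  have tc: "cosh (k * t) = cosh (k * a)"
    by (cases "t \<ge> 0") (auto simp: a_def)
  have sq: "t^2 - s^2 = (a - s) * (a + s)"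
    by (simp add: a_def power2_eq_square algebra_simps)
  have sh: "a * sinh (k * a) = a * tanh (k * a) * cosh (k * a)"
    by (simp add: tanh_def)
  have second: "t * sinh (k * t) - s * tanh (k * s) * cosh (k * t)
      = cosh (k * a) * (a * tanh (k * a) - s * tanh (k * s))"
    unfolding ts tc using sh by (simp add: algebra_simps)
  have mono: "x * tanh (k * x) \<le> y * tanh (k * y)" if "0 \<le> x" "x \<le> y" for x y
  proof -
    have "tanh (k * x) \<le> tanh (k * y)" using that assms by (simp add: mult_left_mono)
    moreover have "tanh (k * x) \<ge> 0" using that assms by simp
    ultimately show ?thesis using that by (simp add: mult_mono)
  qed
  show ?thesis
  proof (cases "a \<ge> s")
    case True
    then have "a * tanh (k * a) - s * tanh (k * s) \<ge> 0" using mono[of s a] assms by simp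
    then show ?thesis unfolding sq second using True a0 assms
      by (simp add: mult_nonneg_nonneg)
  next
    case False
    then have "a * tanh (k * a) - s * tanh (k * s) \<le> 0" using mono[of a s] a0 by simp
    then have "cosh (k * a) * (a * tanh (k * a) - s * tanh (k * s)) \<le> 0"
      by (simp add: mult_nonneg_nonpos)
    moreover have "(a - s) * (a + s) \<le> 0" using False a0 assms
      by (simp add: mult_nonpos_nonneg)
    ultimately show ?thesis unfolding sq second
      by (simp add: mult_nonpos_nonpos)
  qed
qed

lemma ibp1:
  fixes k :: real and m :: nat
  shows "real (m+1) * integral {0..pi} (\<lambda>x. cos x * exp (k * cos x) * sin x ^ m)
    = k * (integral {0..pi} (\<lambda>x. exp (k * cos x) * sin x ^ m)
         - integral {0..pi} (\<lambda>x. cos x ^ 2 * exp (k * cos x) * sin x ^ m))"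
proof -
  define g0 where "g0 = (\<lambda>x. exp (k * cos x) * sin x ^ m)"
  define g1 where "g1 = (\<lambda>x. cos x * exp (k * cos x) * sin x ^ m)"
  define g2 where "g2 = (\<lambda>x. cos x ^ 2 * exp (k * cos x) * sin x ^ m)"
  define F' where "F' = (\<lambda>x::real. real (m+1) * g1 x - k * (g0 x - g2 x))"
  have d: "((\<lambda>x. sin x ^ (m+1) * exp (k * cos x)) has_vector_derivative F' x) (at x within {0..pi})" for x
  proof -
    have "((\<lambda>x. sin x ^ (m+1) * exp (k * cos x)) has_real_derivative
       (real (m+1) * sin x ^ m * cos x * exp (k * cos x) + sin x ^ (m+1) * (exp (k * cos x) * (k * - sin x)))) (at x within {0..pi})"
      apply (auto intro!: derivative_eq_intros)
      apply (cases m)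
       apply (auto simp: algebra_simps)
      done
    moreover have "real (m+1) * sin x ^ m * cos x * exp (k * cos x) + sin x ^ (m+1) * (exp (k * cos x) * (k * - sin x)) = F' x"
    proof -
      have s2: "sin x * sin x = 1 - cos x ^ 2" using sin_squared_eq[of x] by (simp add: power2_eq_square)
      have "sin x ^ (m+1) * sin x = (sin x * sin x) * sin x ^ m" by (simp add: algebra_simps)
      also have "\<dots> = (1 - cos x ^ 2) * sin x ^ m" by (simp only: s2)
      finally have sq: "sin x ^ (m+1) * sin x = (1 - cos x ^ 2) * sin x ^ m" .
      have e0: "sin x ^ (m+1) * (exp (k * cos x) * (k * - sin x)) = - k * exp (k * cos x) * (sin x ^ (m+1) * sin x)"
        by (simp add: algebra_simps)
      have e: "sin x ^ (m+1) * (exp (k * cos x) * (k * - sin x)) = - k * exp (k * cos x) * ((1 - cos x ^ 2) * sin x ^ m)"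
        using e0 unfolding sq .
      show ?thesis unfolding F'_def g0_def g1_def g2_def e
        by (simp add: algebra_simps)
    qed
    ultimately show ?thesis by (simp add: has_real_derivative_iff_has_vector_derivative)
  qed
  have "(F' has_integral (sin pi ^ (m+1) * exp (k * cos pi) - sin 0 ^ (m+1) * exp (k * cos 0))) {0..pi}"
    by (rule fundamental_theorem_of_calculus) (use d in auto)
  then have h: "(F' has_integral 0) {0..pi}" by simp
  have c0: "continuous_on {0..pi} g0" unfolding g0_def by (intro continuous_intros)
  have c1: "continuous_on {0..pi} g1" unfolding g1_def by (intro continuous_intros)
  have c2: "continuous_on {0..pi} g2" unfolding g2_def by (intro continuous_intros)
  have "(F' has_integral (real (m+1) * integral {0..pi} g1 - k * (integral {0..pi} g0 - integral {0..pi} g2))) {0..pi}"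
    unfolding F'_def
    by (intro has_integral_diff has_integral_mult_right integrable_integral
        integrable_continuous_interval c0 c1 c2)
  with h have "real (m+1) * integral {0..pi} g1 - k * (integral {0..pi} g0 - integral {0..pi} g2) = 0"
    using has_integral_unique by blast
  then show ?thesis unfolding g0_def g1_def g2_def by simp
qed

lemma ibp2:
  fixes k :: real and m :: nat
  shows "k * (integral {0..pi} (\<lambda>x. cos x * exp (k * cos x) * sin x ^ m)
        - integral {0..pi} (\<lambda>x. cos x ^ 3 * exp (k * cos x) * sin x ^ m))
    = real (m+2) * integral {0..pi} (\<lambda>x. cos x ^ 2 * exp (k * cos x) * sin x ^ m)
      - integral {0..pi} (\<lambda>x. exp (k * cos x) * sin x ^ m)"
proof -
  define g0 where "g0 = (\<lambda>x. exp (k * cos x) * sin x ^ m)"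
  define g1 where "g1 = (\<lambda>x. cos x * exp (k * cos x) * sin x ^ m)"
  define g2 where "g2 = (\<lambda>x. cos x ^ 2 * exp (k * cos x) * sin x ^ m)"
  define g3 where "g3 = (\<lambda>x. cos x ^ 3 * exp (k * cos x) * sin x ^ m)"
  define F' where "F' = (\<lambda>x::real. real (m+2) * g2 x - g0 x - k * (g1 x - g3 x))"
  have d: "((\<lambda>x. cos x * sin x ^ (m+1) * exp (k * cos x)) has_vector_derivative F' x) (at x within {0..pi})" for x
  proof -
    have s2: "sin x * sin x = 1 - cos x ^ 2" using sin_squared_eq[of x] by (simp add: power2_eq_square)
    have "sin x ^ (m+1) * sin x = (sin x * sin x) * sin x ^ m" by (simp add: algebra_simps)
    also have "\<dots> = (1 - cos x ^ 2) * sin x ^ m" by (simp only: s2)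
    finally have sq: "sin x ^ (m+1) * sin x = (1 - cos x ^ 2) * sin x ^ m" .
    have "((\<lambda>x. cos x * sin x ^ (m+1) * exp (k * cos x)) has_real_derivative
       (- (sin x ^ (m+1) * sin x) * exp (k * cos x) + real (m+1) * cos x ^ 2 * sin x ^ m * exp (k * cos x)
        - k * cos x * exp (k * cos x) * (sin x ^ (m+1) * sin x))) (at x within {0..pi})"
      apply (auto intro!: derivative_eq_intros)
      apply (cases m)
       apply (auto simp: algebra_simps power2_eq_square)
      done
    moreover
    have "- (sin x ^ (m+1) * sin x) * exp (k * cos x) + real (m+1) * cos x ^ 2 * sin x ^ m * exp (k * cos x)
        - k * cos x * exp (k * cos x) * (sin x ^ (m+1) * sin x) = F' x"
      unfolding sq F'_def g0_def g1_def g2_def g3_def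
      by (simp add: algebra_simps power2_eq_square power3_eq_cube)
    ultimately show ?thesis by (simp add: has_real_derivative_iff_has_vector_derivative)
  qed
  have "(F' has_integral (cos pi * sin pi ^ (m+1) * exp (k * cos pi) - cos 0 * sin 0 ^ (m+1) * exp (k * cos 0))) {0..pi}"
    by (rule fundamental_theorem_of_calculus) (use d in auto)
  then have h: "(F' has_integral 0) {0..pi}" by simp
  have c0: "continuous_on {0..pi} g0" unfolding g0_def by (intro continuous_intros)
  have c1: "continuous_on {0..pi} g1" unfolding g1_def by (intro continuous_intros)
  have c2: "continuous_on {0..pi} g2" unfolding g2_def by (intro continuous_intros)
  have c3: "continuous_on {0..pi} g3" unfolding g3_def by (intro continuous_intros)
  have "(F' has_integral (real (m+2) * integral {0..pi} g2 - integral {0..pi} g0 - k * (integral {0..pi} g1 - integral {0..pi} g3))) {0..pi}"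
    unfolding F'_def
    by (intro has_integral_diff has_integral_mult_right integrable_integral
        integrable_continuous_interval c0 c1 c2 c3)
  with h have "real (m+2) * integral {0..pi} g2 - integral {0..pi} g0 - k * (integral {0..pi} g1 - integral {0..pi} g3) = 0"
    using has_integral_unique by blast
  then show ?thesis unfolding g0_def g1_def g2_def g3_def by simp
qed

lemma int_add2:
  fixes a b :: "real \<Rightarrow> real"
  assumes "continuous_on {0..pi} a" "continuous_on {0..pi} b"
  shows "integral {0..pi} (\<lambda>x. a x + b x) = integral {0..pi} a + integral {0..pi} b"
  by (rule integral_add) (use assms integrable_continuous_interval in auto)

lemma cheb:
  fixes k :: real and m :: nat
  assumes k: "k > 0"
  shows "integral {0..pi} (\<lambda>x. exp (k * cos x) * sin x ^ m) > 0"
    and "integral {0..pi} (\<lambda>x. exp (k * cos x) * sin x ^ m) * integral {0..pi} (\<lambda>x. cos x ^ 3 * exp (k * cos x) * sin x ^ m)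
       > integral {0..pi} (\<lambda>x. cos x * exp (k * cos x) * sin x ^ m) * integral {0..pi} (\<lambda>x. cos x ^ 2 * exp (k * cos x) * sin x ^ m)"
proof -
  define T where "T = integral {0..pi} (\<lambda>x. cosh (k * cos x) * sin x ^ m)"
  define R where "R = integral {0..pi} (\<lambda>x. cos x ^ 2 * cosh (k * cos x) * sin x ^ m)"
  define Q where "Q = integral {0..pi} (\<lambda>x. cos x * sinh (k * cos x) * sin x ^ m)"
  define P where "P = integral {0..pi} (\<lambda>x. cos x ^ 3 * sinh (k * cos x) * sin x ^ m)"
  have ex: "exp (k * cos x) = cosh (k * cos x) + sinh (k * cos x)" for x by (simp add: cosh_plus_sinh)
  have I0: "integral {0..pi} (\<lambda>x. exp (k * cos x) * sin x ^ m) = T"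
  proof -
    have "integral {0..pi} (\<lambda>x. exp (k * cos x) * sin x ^ m) =
      integral {0..pi} (\<lambda>x. cosh (k * cos x) * sin x ^ m + sinh (k * cos x) * sin x ^ m)"
      by (simp add: ex algebra_simps)
    also have "\<dots> = T + integral {0..pi} (\<lambda>x. sinh (k * cos x) * sin x ^ m)"
      unfolding T_def by (rule int_add2) (intro continuous_intros)+
    also have "integral {0..pi} (\<lambda>x. sinh (k * cos x) * sin x ^ m) = 0"
      by (rule int_odd) simp
    finally show ?thesis by simp
  qed
  have I1: "integral {0..pi} (\<lambda>x. cos x * exp (k * cos x) * sin x ^ m) = Q"
  proof -
    have "integral {0..pi} (\<lambda>x. cos x * exp (k * cos x) * sin x ^ m) =
      integral {0..pi} (\<lambda>x. cos x * cosh (k * cos x) * sin x ^ m + cos x * sinh (k * cos x) * sin x ^ m)"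
      by (simp add: ex algebra_simps)
    also have "\<dots> = integral {0..pi} (\<lambda>x. cos x * cosh (k * cos x) * sin x ^ m) + Q"
      unfolding Q_def by (rule int_add2) (intro continuous_intros)+
    also have "integral {0..pi} (\<lambda>x. cos x * cosh (k * cos x) * sin x ^ m) = 0"
      by (rule int_odd) simp
    finally show ?thesis by simp
  qed
  have I2: "integral {0..pi} (\<lambda>x. cos x ^ 2 * exp (k * cos x) * sin x ^ m) = R"
  proof -
    have "integral {0..pi} (\<lambda>x. cos x ^ 2 * exp (k * cos x) * sin x ^ m) =
      integral {0..pi} (\<lambda>x. cos x ^ 2 * cosh (k * cos x) * sin x ^ m + cos x ^ 2 * sinh (k * cos x) * sin x ^ m)"
      by (simp add: ex algebra_simps)
    also have "\<dots> = R + integral {0..pi} (\<lambda>x. cos x ^ 2 * sinh (k * cos x) * sin x ^ m)"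
      unfolding R_def by (rule int_add2) (intro continuous_intros)+
    also have "integral {0..pi} (\<lambda>x. cos x ^ 2 * sinh (k * cos x) * sin x ^ m) = 0"
      by (rule int_odd) simp
    finally show ?thesis by simp
  qed
  have I3: "integral {0..pi} (\<lambda>x. cos x ^ 3 * exp (k * cos x) * sin x ^ m) = P"
  proof -
    have "integral {0..pi} (\<lambda>x. cos x ^ 3 * exp (k * cos x) * sin x ^ m) =
      integral {0..pi} (\<lambda>x. cos x ^ 3 * cosh (k * cos x) * sin x ^ m + cos x ^ 3 * sinh (k * cos x) * sin x ^ m)"
      by (simp add: ex algebra_simps)
    also have "\<dots> = integral {0..pi} (\<lambda>x. cos x ^ 3 * cosh (k * cos x) * sin x ^ m) + P"
      unfolding P_def by (rule int_add2) (intro continuous_intros)+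
    also have "integral {0..pi} (\<lambda>x. cos x ^ 3 * cosh (k * cos x) * sin x ^ m) = 0"
      by (rule int_odd) simp
    finally show ?thesis by simp
  qed
  have sinnn: "x \<in> {0..pi} \<Longrightarrow> sin x ^ m \<ge> 0" for x by (simp add: sin_ge_zero)
  have Tpos: "T > 0" unfolding T_def
    by (rule int_pos[where z="pi/2"]) (auto intro!: continuous_intros simp: sinnn)
  have Rpos: "R > 0" unfolding R_def
    by (rule int_pos[where z="pi/3"]) (auto intro!: continuous_intros simp: sinnn cos_60 sin_60)
  define mm where "mm = R / T"
  have mm: "mm > 0" using Rpos Tpos by (simp add: mm_def)
  define s where "s = sqrt mm"
  have s: "s > 0" "s^2 = mm" using mm by (auto simp: s_def)
  define \<rho> where "\<rho> = s * tanh (k * s)"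
  have rho: "\<rho> > 0" using s k by (simp add: \<rho>_def)
  define F where "F = (\<lambda>x. (cos x ^ 2 - mm) * (cos x * sinh (k * cos x) - \<rho> * cosh (k * cos x)) * sin x ^ m)"
  have Fc: "continuous_on {0..pi} F" unfolding F_def by (intro continuous_intros)
  have Fnn: "F x \<ge> 0" if "x \<in> {0..pi}" for x
  proof -
    have "(cos x ^ 2 - s^2) * (cos x * sinh (k * cos x) - s * tanh (k * s) * cosh (k * cos x)) \<ge> 0"
      by (rule pointwise) (use s k in auto)
    then show ?thesis unfolding F_def \<rho>_def using sinnn[OF that] s(2) by simp
  qed
  have "integral {0..pi} F > 0"
    by (rule int_pos[OF Fc Fnn, where z="pi/2"]) (use mm rho in \<open>auto simp: F_def\<close>)
  moreover have "integral {0..pi} F = P - \<rho> * R - mm * Q + mm * \<rho> * T"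
  proof -
    have eq: "F = (\<lambda>x. (cos x ^ 3 * sinh (k * cos x) * sin x ^ m - \<rho> * (cos x ^ 2 * cosh (k * cos x) * sin x ^ m))
         - mm * (cos x * sinh (k * cos x) * sin x ^ m) + mm * \<rho> * (cosh (k * cos x) * sin x ^ m))"
      unfolding F_def by (auto simp: algebra_simps power2_eq_square power3_eq_cube)
    have "(F has_integral (P - \<rho> * R - mm * Q + mm * \<rho> * T)) {0..pi}"
      unfolding eq P_def R_def Q_def T_def
      by (intro has_integral_diff has_integral_add has_integral_mult_right integrable_integral
          integrable_continuous_interval continuous_intros)
    then show ?thesis by (rule integral_unique)
  qed
  ultimately have "P - mm * Q > 0" using Tpos by (simp add: mm_def)
  then have "T * (P - mm * Q) > 0" using Tpos by simp
  then have "T * P > Q * R" using Tpos by (simp add: mm_def field_simps)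
  then show "integral {0..pi} (\<lambda>x. exp (k * cos x) * sin x ^ m) * integral {0..pi} (\<lambda>x. cos x ^ 3 * exp (k * cos x) * sin x ^ m)
       > integral {0..pi} (\<lambda>x. cos x * exp (k * cos x) * sin x ^ m) * integral {0..pi} (\<lambda>x. cos x ^ 2 * exp (k * cos x) * sin x ^ m)"
    unfolding I0 I1 I2 I3 .
  show "integral {0..pi} (\<lambda>x. exp (k * cos x) * sin x ^ m) > 0" unfolding I0 by (rule Tpos)
qed

lemma algebra_final:
  fixes I0 I1 I2 I3 k :: real and m :: nat
  assumes k: "k > 0" and p: "I0 > 0" and A: "real (m+1) * I1 = k * (I0 - I2)"
    and B: "k * (I1 - I3) = real (m+2) * I2 - I0" and ineq: "I0 * I3 > I1 * I2"
  shows "(I1 / I0)\<^sup>2 + real (m+2) * ((I1 / I0) / k) - 1 > 0"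
proof -
  have I2e: "I2 = I0 - real (m+1) * I1 / k" using A k by (simp add: field_simps)
  have I3e: "I3 = I1 - (real (m+2) * I2 - I0) / k" using B k by (simp add: field_simps)
  have key: "k^2 * (I0 * I3 - I1 * I2) = real (m+1) * (k * I1^2 + real (m+2) * I1 * I0 - k * I0^2)"
    unfolding I3e unfolding I2e using k by (simp add: field_simps power2_eq_square)
  have "k^2 * (I0 * I3 - I1 * I2) > 0" using ineq k by simp
  then have pos: "k * I1^2 + real (m+2) * I1 * I0 - k * I0^2 > 0"
    unfolding key by (simp add: zero_less_mult_iff)
  have "(I1 / I0)\<^sup>2 + real (m+2) * ((I1 / I0) / k) - 1 = (k * I1^2 + real (m+2) * I1 * I0 - k * I0^2) / (k * I0^2)"
    using k p by (simp add: field_simps power2_eq_square)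
  also have "\<dots> > 0" using pos k p by simp
  finally show ?thesis .
qed

theorem lemma2:
  fixes n :: nat and \<kappa> :: real
  assumes "n \<ge> 2" and "\<kappa> > 0"
  shows "beta n \<kappa> > 0"
proof -
  obtain m where n: "n = m + 2" using assms(1) by (metis add.commute le_Suc_ex)
  have nm: "n - 2 = m" using n by simp
  show ?thesis
    unfolding beta_def sigma_tilde_def cfun_def nm
    unfolding n
    by (rule algebra_final[OF assms(2) cheb(1)[OF assms(2)] ibp1 ibp2 cheb(2)[OF assms(2)]])
qed

end
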